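(* Let $\{\Pi_i\}_{i=1}^n$ be a qubit POVM with $\Pi_i=\alpha_i(\mathbb{I}+\hat n_i\cdot\vec\sigma)$, $\alpha_i\ge0$, $\hat n_i$ unit, $\sum_i\alpha_i=1$, $\sum_i\alpha_i\hat n_i=\vec0$, and let $\mathrm{sym}\{\Pi_i\}$ be the $2n$-outcome POVM $\{\tfrac{\alpha_i}{2}(\mathbb{I}+\hat n_i\cdot\vec\sigma),\tfrac{\alpha_i}{2}(\mathbb{I}-\hat n_i\cdot\vec\sigma)\}_{i=1}^n$. Then $$R(\mathrm{sym}\{\Pi_i\})=\min_{\hat c\in\mathbb{R}^3,\ |\hat c|=1}\ \sum_{i=1}^n\alpha_i|\hat c\cdot\hat n_i|.$$
   Context: A POVM $\{\Pi_i\}$ simulates a family $\{M_{a|x}\}$ if $M_{a|x}=\sum_i p(a|x,i)\Pi_i$ with $p(a|x,i)\ge0$, $\sum_a p(a|x,i)=1$. $\mathcal{P}_r$ is the family of two-outcome POVMs $\{\tfrac12(\mathbb{I}\pm r\hat n\cdot\vec\sigma)\}$ over all unit $\hat n\in\mathbb{R}^3$. $R(\{\Pi_i\})$ is the largest $r$ such that $\{\Pi_i\}$ simulates $\mathcal{P}_r$. *)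

theory Defs
  imports "HOL-Analysis.Analysis"
begin

type_synonym qop = "complex^2^2"

definition sigma_x :: qop where
  "sigma_x = (\<chi> i j. if i \<noteq> j then 1 else 0)"

definition sigma_y :: qop where
  "sigma_y = (\<chi> i j. if i = 1 \<and> j = 2 then - \<i> else if i = 2 \<and> j = 1 then \<i> else 0)"

definition sigma_z :: qop where
  "sigma_z = (\<chi> i j. if i = j then (if i = 1 then 1 else -1) else 0)"

definition dot_sigma :: "real^3 \<Rightarrow> qop" where
  "dot_sigma v = (v$1) *\<^sub>R sigma_x + (v$2) *\<^sub>R sigma_y + (v$3) *\<^sub>R sigma_z"

definition idq :: qop where
  "idq = mat 1"

definition simulates ::
  "'j set \<Rightarrow> ('j \<Rightarrow> qop) \<Rightarrow> 'x set \<Rightarrow> 'a set \<Rightarrow> ('x \<Rightarrow> 'a \<Rightarrow> qop) \<Rightarrow> bool" where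
  "simulates J Q X A M \<longleftrightarrow>
     (\<exists>p :: 'x \<Rightarrow> 'a \<Rightarrow> 'j \<Rightarrow> real.
        (\<forall>x\<in>X. \<forall>a\<in>A. \<forall>j\<in>J. p x a j \<ge> 0) \<and>
        (\<forall>x\<in>X. \<forall>j\<in>J. (\<Sum>a\<in>A. p x a j) = 1) \<and>
        (\<forall>x\<in>X. \<forall>a\<in>A. M x a = (\<Sum>j\<in>J. p x a j *\<^sub>R Q j)))"

definition unit_sphere3 :: "(real^3) set" where
  "unit_sphere3 = {v. norm v = 1}"

definition P_fam :: "real \<Rightarrow> real^3 \<Rightarrow> bool \<Rightarrow> qop" where
  "P_fam r v b = (1/2) *\<^sub>R (idq + (if b then r else - r) *\<^sub>R dot_sigma v)"

definition simulates_P :: "'j set \<Rightarrow> ('j \<Rightarrow> qop) \<Rightarrow> real \<Rightarrow> bool" where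
  "simulates_P J Q r \<longleftrightarrow> simulates J Q unit_sphere3 UNIV (P_fam r)"

definition R_POVM :: "'j set \<Rightarrow> ('j \<Rightarrow> qop) \<Rightarrow> real" where
  "R_POVM J Q = (GREATEST r. simulates_P J Q r)"

definition sym_POVM :: "(nat \<Rightarrow> real) \<Rightarrow> (nat \<Rightarrow> real^3) \<Rightarrow> nat \<times> bool \<Rightarrow> qop" where
  "sym_POVM \<alpha> nv ib = (\<alpha> (fst ib) / 2) *\<^sub>R
      (idq + (if snd ib then 1 else -1) *\<^sub>R dot_sigma (nv (fst ib)))"

end

theory Submission imports Defs begin

lemma linear_dot_sigma: "linear dot_sigma"
  unfolding linear_iff dot_sigma_def by (auto simp: algebra_simps)

definition coefs :: "qop \<Rightarrow> real^3" where
  "coefs M = (\<chi> k. if k = 1 then Re (M$1$2 + M$2$1) / 2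
                 else if k = 2 then Im (M$2$1 - M$1$2) / 2
                 else Re (M$1$1 - M$2$2) / 2)"

lemma linear_coefs: "linear coefs"
  unfolding linear_iff coefs_def by (auto simp: vec_eq_iff field_simps)

lemma coefs_idq: "coefs idq = 0"
  unfolding coefs_def idq_def by (simp add: vec_eq_iff mat_def)

lemma coefs_dot_sigma: "coefs (dot_sigma u) = u"
  unfolding coefs_def dot_sigma_def sigma_x_def sigma_y_def sigma_z_def
  by (simp add: vec_eq_iff forall_3)


definition zon :: "nat set \<Rightarrow> (nat \<Rightarrow> real^3) \<Rightarrow> (real^3) set" where
  "zon W w = {(\<Sum>i\<in>W. t i *\<^sub>R w i) | t. \<forall>i\<in>W. \<bar>t i\<bar> \<le> 1}"

lemma zon_insert:
  assumes "finite W" "i \<notin> W"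
  shows "zon (insert i W) w = {x + y | x y. x \<in> (\<lambda>s. s *\<^sub>R w i) ` {-1..1} \<and> y \<in> zon W w}"
proof (intro set_eqI iffI)
  fix z assume "z \<in> zon (insert i W) w"
  then obtain t where t: "\<forall>j\<in>insert i W. \<bar>t j\<bar> \<le> 1" "z = (\<Sum>j\<in>insert i W. t j *\<^sub>R w j)"
    unfolding zon_def by blast
  have "z = t i *\<^sub>R w i + (\<Sum>j\<in>W. t j *\<^sub>R w j)" using t assms by simp
  moreover have "t i \<in> {-1..1}" using t by (auto simp: abs_le_iff)
  moreover have "(\<Sum>j\<in>W. t j *\<^sub>R w j) \<in> zon W w" using t unfolding zon_def by auto
  ultimately show "z \<in> {x + y | x y. x \<in> (\<lambda>s. s *\<^sub>R w i) ` {-1..1} \<and> y \<in> zon W w}" by blast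
next
  fix z assume "z \<in> {x + y | x y. x \<in> (\<lambda>s. s *\<^sub>R w i) ` {-1..1} \<and> y \<in> zon W w}"
  then obtain s t where st: "s \<in> {-1..1}" "\<forall>j\<in>W. \<bar>t j\<bar> \<le> 1"
      "z = s *\<^sub>R w i + (\<Sum>j\<in>W. t j *\<^sub>R w j)"
    unfolding zon_def by blast
  define t' where "t' = t(i := s)"
  have "(\<Sum>j\<in>W. t j *\<^sub>R w j) = (\<Sum>j\<in>W. t' j *\<^sub>R w j)"
    using assms by (intro sum.cong) (auto simp: t'_def)
  then have "z = (\<Sum>j\<in>insert i W. t' j *\<^sub>R w j)" using st assms by (simp add: t'_def)
  moreover have "\<forall>j\<in>insert i W. \<bar>t' j\<bar> \<le> 1" using st by (auto simp: t'_def)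
  ultimately show "z \<in> zon (insert i W) w" unfolding zon_def by blast
qed

lemma compact_zon: "finite W \<Longrightarrow> compact (zon W w)"
proof (induction W rule: finite_induct)
  case empty
  have "zon {} w = {0}" unfolding zon_def by auto
  then show ?case by simp
next
  case (insert i W)
  have "compact ((\<lambda>s. s *\<^sub>R w i) ` {-1..1::real})"
    by (intro compact_continuous_image continuous_intros) auto
  then show ?case using insert zon_insert[of W i w] by (simp add: compact_sums)
qed

lemma convex_zon: "convex (zon W w)"
  unfolding convex_def
proof (intro ballI allI impI)
  fix x y and u v :: real
  assume x: "x \<in> zon W w" and y: "y \<in> zon W w" and uv: "0 \<le> u" "0 \<le> v" "u + v = 1"
  obtain t1 where t1: "\<forall>i\<in>W. \<bar>t1 i\<bar> \<le> 1" "x = (\<Sum>i\<in>W. t1 i *\<^sub>R w i)" using x unfolding zon_def by blast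
  obtain t2 where t2: "\<forall>i\<in>W. \<bar>t2 i\<bar> \<le> 1" "y = (\<Sum>i\<in>W. t2 i *\<^sub>R w i)" using y unfolding zon_def by blast
  have "u *\<^sub>R x + v *\<^sub>R y = (\<Sum>i\<in>W. (u * t1 i + v * t2 i) *\<^sub>R w i)"
    using t1 t2 by (simp add: scaleR_sum_right sum.distrib scaleR_add_left)
  moreover have "\<forall>i\<in>W. \<bar>u * t1 i + v * t2 i\<bar> \<le> 1"
  proof
    fix i assume i: "i \<in> W"
    have "\<bar>u * t1 i + v * t2 i\<bar> \<le> u * \<bar>t1 i\<bar> + v * \<bar>t2 i\<bar>"
      using uv by (simp add: abs_triangle_ineq[THEN order_trans] abs_mult)
    also have "\<dots> \<le> u * 1 + v * 1"
      using uv t1 t2 i by (intro add_mono mult_left_mono) auto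
    finally show "\<bar>u * t1 i + v * t2 i\<bar> \<le> 1" using uv by simp
  qed
  ultimately show "u *\<^sub>R x + v *\<^sub>R y \<in> zon W w" unfolding zon_def mem_Collect_eq
    by (intro exI[of _ "\<lambda>i. u * t1 i + v * t2 i"]) auto
qed

lemma sum_times_bool:
  "finite W \<Longrightarrow> (\<Sum>j\<in>W \<times> (UNIV::bool set). f j) = (\<Sum>i\<in>W. f (i, True) + f (i, False))"
proof -
  have "(\<Sum>j\<in>W \<times> (UNIV::bool set). f j) = (\<Sum>i\<in>W. \<Sum>b\<in>UNIV. f (i,b))"
    by (simp add: sum.cartesian_product)
  then show ?thesis by (simp add: UNIV_bool add.commute)
qed


lemma coefs_P_fam: "coefs (P_fam r v b) = ((if b then r else - r) / 2) *\<^sub>R v"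
  using linear_coefs unfolding P_fam_def
  by (simp add: linear_add linear_cmul coefs_idq coefs_dot_sigma)

lemma coefs_sym: "coefs (sym_POVM \<alpha> nv j) = (\<alpha> (fst j) / 2 * (if snd j then 1 else -1)) *\<^sub>R nv (fst j)"
  using linear_coefs unfolding sym_POVM_def
  by (simp add: linear_add linear_cmul coefs_idq coefs_dot_sigma)

lemma upper:
  fixes S :: "nat set"
  assumes fin: "finite S" and apos: "\<forall>i\<in>S. \<alpha> i \<ge> 0"
    and sim: "simulates_P (S \<times> UNIV) (sym_POVM \<alpha> nv) r" and c: "norm c = 1"
  shows "r \<le> (\<Sum>i\<in>S. \<alpha> i * \<bar>c \<bullet> nv i\<bar>)"
proof -
  let ?J = "S \<times> (UNIV :: bool set)"
  obtain p where p0: "\<forall>x\<in>unit_sphere3. \<forall>a\<in>UNIV. \<forall>j\<in>?J. p x a j \<ge> 0"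
    and p1: "\<forall>x\<in>unit_sphere3. \<forall>j\<in>?J. (\<Sum>a\<in>UNIV. p x a j) = 1"
    and p2: "\<forall>x\<in>unit_sphere3. \<forall>a\<in>UNIV. P_fam r x a = (\<Sum>j\<in>?J. p x a j *\<^sub>R sym_POVM \<alpha> nv j)"
    using sim unfolding simulates_P_def simulates_def by blast
  have cs: "c \<in> unit_sphere3" using c by (simp add: unit_sphere3_def)
  let ?g = "\<lambda>j. (\<alpha> (fst j) / 2 * (if snd j then 1 else -1)) *\<^sub>R nv (fst j)"
  have e: "coefs (P_fam r c b) = (\<Sum>j\<in>?J. p c b j *\<^sub>R ?g j)" for b
    using p2 cs linear_coefs
    by (simp add: linear_sum linear_cmul coefs_sym)
  have "r *\<^sub>R c = coefs (P_fam r c True) - coefs (P_fam r c False)"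
    by (simp add: coefs_P_fam scaleR_left_distrib[symmetric])
  also have "\<dots> = (\<Sum>j\<in>?J. (p c True j - p c False j) *\<^sub>R ?g j)"
    unfolding e sum_subtractf[symmetric] by (rule sum.cong) (auto simp: algebra_simps diff_divide_distrib)
  finally have rc: "r *\<^sub>R c = (\<Sum>j\<in>?J. (p c True j - p c False j) *\<^sub>R ?g j)" .
  have "c \<bullet> c = 1" using c by (simp add: dot_square_norm)
  then have "r = (r *\<^sub>R c) \<bullet> c" by simp
  also have "\<dots> = (\<Sum>j\<in>?J. (p c True j - p c False j) * (\<alpha> (fst j) / 2 * (if snd j then 1 else -1) * (nv (fst j) \<bullet> c)))"
    unfolding rc by (simp add: inner_sum_left mult.assoc)
  also have "\<dots> \<le> (\<Sum>j\<in>?J. \<alpha> (fst j) / 2 * \<bar>c \<bullet> nv (fst j)\<bar>)"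
  proof (rule sum_mono)
    fix j assume j: "j \<in> ?J"
    have q: "p c True j \<ge> 0" "p c False j \<ge> 0" "p c True j + p c False j = 1"
      using p0 p1 cs j by (auto simp: UNIV_bool add.commute)
    have x: "\<bar>p c True j - p c False j\<bar> \<le> 1" using q by linarith
    have a: "\<alpha> (fst j) \<ge> 0" using apos j by auto
    let ?y = "\<alpha> (fst j) / 2 * (if snd j then 1 else -1) * (nv (fst j) \<bullet> c)"
    have "(p c True j - p c False j) * ?y \<le> \<bar>p c True j - p c False j\<bar> * \<bar>?y\<bar>"
      by (metis abs_ge_self abs_mult)
    also have "\<dots> \<le> 1 * \<bar>?y\<bar>" by (intro mult_right_mono x) simp
    also have "\<bar>?y\<bar> = \<alpha> (fst j) / 2 * \<bar>c \<bullet> nv (fst j)\<bar>"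
      using a by (simp add: abs_mult inner_commute)
    finally show "(p c True j - p c False j) * ?y \<le> \<alpha> (fst j) / 2 * \<bar>c \<bullet> nv (fst j)\<bar>" by simp
  qed
  also have "\<dots> = (\<Sum>i\<in>S. \<alpha> i * \<bar>c \<bullet> nv i\<bar>)"
    using fin by (simp add: sum_times_bool)
  finally show ?thesis .
qed


lemma h_scale: "(\<Sum>i\<in>S. \<alpha> i * \<bar>(k *\<^sub>R c) \<bullet> nv i\<bar>) = \<bar>k\<bar> * (\<Sum>i\<in>S. \<alpha> i * \<bar>c \<bullet> nv i\<bar>)"
  by (simp add: sum_distrib_left abs_mult algebra_simps)

lemma in_zon:
  fixes S :: "nat set"
  assumes fin: "finite S" and apos: "\<forall>i\<in>S. \<alpha> i \<ge> 0" and m0: "m \<ge> 0"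
    and minm: "\<forall>c :: real^3. norm c = 1 \<longrightarrow> m \<le> (\<Sum>i\<in>S. \<alpha> i * \<bar>c \<bullet> nv i\<bar>)"
    and v: "norm v = 1"
  shows "m *\<^sub>R v \<in> zon S (\<lambda>i. \<alpha> i *\<^sub>R nv i)"
proof (rule ccontr)
  let ?Z = "zon S (\<lambda>i. \<alpha> i *\<^sub>R nv i)"
  assume "m *\<^sub>R v \<notin> ?Z"
  then obtain a b where ab: "a \<bullet> (m *\<^sub>R v) < b" "\<forall>x\<in>?Z. b < a \<bullet> x"
    using separating_hyperplane_closed_point[OF convex_zon compact_imp_closed[OF compact_zon[OF fin]]]
    by blast
  let ?h = "\<lambda>c. (\<Sum>i\<in>S. \<alpha> i * \<bar>c \<bullet> nv i\<bar>)"
  define x0 where "x0 = (\<Sum>i\<in>S. (- sgn (a \<bullet> nv i)) *\<^sub>R (\<alpha> i *\<^sub>R nv i))"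
  have "x0 \<in> ?Z" unfolding zon_def x0_def mem_Collect_eq
    by (intro exI[of _ "\<lambda>i. - sgn (a \<bullet> nv i)"]) (auto simp: abs_sgn_eq)
  moreover have "a \<bullet> x0 = - ?h a"
    unfolding x0_def by (simp add: inner_sum_right sum_negf[symmetric] abs_sgn algebra_simps)
  ultimately have hb: "- ?h a > b" using ab by auto
  have "a \<noteq> 0" using ab hb by auto
  then have na: "norm a > 0" by simp
  have "norm ((1 / norm a) *\<^sub>R a) = 1" using na by simp
  then have "m \<le> ?h ((1 / norm a) *\<^sub>R a)" using minm by blast
  also have "?h ((1 / norm a) *\<^sub>R a) = ?h a / norm a"
    using h_scale[of \<alpha> "1 / norm a" a nv S] na by simp
  finally have "norm a * m \<le> ?h a" using na
    by (simp add: pos_le_divide_eq mult.commute)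
  moreover have "a \<bullet> (m *\<^sub>R v) \<ge> - (norm a * m)"
  proof -
    have "\<bar>a \<bullet> v\<bar> \<le> norm a" using Cauchy_Schwarz_ineq2[of a v] v by simp
    then have "- norm a \<le> a \<bullet> v" by linarith
    then have "m * (- norm a) \<le> m * (a \<bullet> v)" using m0 by (rule mult_left_mono)
    then have "m * (a \<bullet> v) \<ge> - (m * norm a)" by simp
    then show ?thesis by (simp add: mult.commute)
  qed
  ultimately show False using ab hb by linarith
qed


lemma pair_term:
  fixes x a :: real and D I :: "'a::real_vector"
  shows "((1 + x) / 2) *\<^sub>R ((a / 2) *\<^sub>R (I + 1 *\<^sub>R D))
       + ((1 - x) / 2) *\<^sub>R ((a / 2) *\<^sub>R (I + (-1) *\<^sub>R D))
       = (a / 2) *\<^sub>R I + (x * a / 2) *\<^sub>R D"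
proof -
  have "((1 + x) / 2) *\<^sub>R ((a / 2) *\<^sub>R (I + 1 *\<^sub>R D))
       + ((1 - x) / 2) *\<^sub>R ((a / 2) *\<^sub>R (I + (-1) *\<^sub>R D))
      = (((1 + x) / 2) * (a / 2) + ((1 - x) / 2) * (a / 2)) *\<^sub>R I
       + (((1 + x) / 2) * (a / 2) - ((1 - x) / 2) * (a / 2)) *\<^sub>R D"
    by (simp add: scaleR_add_right scaleR_add_left scaleR_diff_left scaleR_diff_right)
  also have "((1 + x) / 2) * (a / 2) + ((1 - x) / 2) * (a / 2) = a / 2" by (simp add: field_simps)
  also have "((1 + x) / 2) * (a / 2) - ((1 - x) / 2) * (a / 2) = x * a / 2" by (simp add: field_simps)
  finally show ?thesis .
qed

lemma lower:
  fixes S :: "nat set"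
  assumes fin: "finite S" and apos: "\<forall>i\<in>S. \<alpha> i \<ge> 0" and m0: "m \<ge> 0"
    and asum: "(\<Sum>i\<in>S. \<alpha> i) = 1"
    and minm: "\<forall>c :: real^3. norm c = 1 \<longrightarrow> m \<le> (\<Sum>i\<in>S. \<alpha> i * \<bar>c \<bullet> nv i\<bar>)"
  shows "simulates_P (S \<times> UNIV) (sym_POVM \<alpha> nv) m"
proof -
  let ?P = "\<lambda>v t. (\<forall>i\<in>S. \<bar>t i\<bar> \<le> 1) \<and> m *\<^sub>R v = (\<Sum>i\<in>S. t i *\<^sub>R (\<alpha> i *\<^sub>R nv i))"
  define T where "T v = (SOME t. ?P v t)" for v
  have T: "?P v (T v)" if "v \<in> unit_sphere3" for v
  proof -
    have "norm v = 1" using that by (simp add: unit_sphere3_def)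
    then have "\<exists>t. ?P v t" using in_zon[OF fin apos m0 minm] unfolding zon_def by fastforce
    then show ?thesis unfolding T_def by (rule someI_ex)
  qed
  define sg where "sg b = (if b then 1 else -1 :: real)" for b
  define p where "p v b j = (1 + sg b * sg (snd j) * T v (fst j)) / 2" for v b j
  show ?thesis unfolding simulates_P_def simulates_def
  proof (intro exI[of _ p] conjI ballI)
    fix v b j assume v: "v \<in> unit_sphere3" and j: "j \<in> S \<times> (UNIV::bool set)"
    have "\<bar>T v (fst j)\<bar> \<le> 1" using T[OF v] j by auto
    then show "0 \<le> p v b j" unfolding p_def sg_def by (auto simp: abs_le_iff)
  next
    fix v j assume v: "v \<in> unit_sphere3" and j: "j \<in> S \<times> (UNIV::bool set)"
    show "(\<Sum>b\<in>UNIV. p v b j) = 1" unfolding p_def sg_def by (simp add: UNIV_bool field_simps)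
  next
    fix v b assume v: "v \<in> unit_sphere3"
    have Tv: "m *\<^sub>R v = (\<Sum>i\<in>S. T v i *\<^sub>R (\<alpha> i *\<^sub>R nv i))" using T[OF v] by blast
    have "(\<Sum>j\<in>S \<times> UNIV. p v b j *\<^sub>R sym_POVM \<alpha> nv j)
        = (\<Sum>i\<in>S. (\<alpha> i / 2) *\<^sub>R idq + (sg b * T v i * \<alpha> i / 2) *\<^sub>R dot_sigma (nv i))"
      unfolding sum_times_bool[OF fin]
    proof (rule sum.cong[OF refl])
      fix i
      show "p v b (i, True) *\<^sub>R sym_POVM \<alpha> nv (i, True) + p v b (i, False) *\<^sub>R sym_POVM \<alpha> nv (i, False)
          = (\<alpha> i / 2) *\<^sub>R idq + (sg b * T v i * \<alpha> i / 2) *\<^sub>R dot_sigma (nv i)"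
      proof -
        have e1: "p v b (i, True) = (1 + sg b * T v i) / 2" "p v b (i, False) = (1 - sg b * T v i) / 2"
          unfolding p_def sg_def by auto
        have e2: "sym_POVM \<alpha> nv (i, True) = (\<alpha> i / 2) *\<^sub>R (idq + 1 *\<^sub>R dot_sigma (nv i))"
          "sym_POVM \<alpha> nv (i, False) = (\<alpha> i / 2) *\<^sub>R (idq + (-1) *\<^sub>R dot_sigma (nv i))"
          unfolding sym_POVM_def by auto
        show ?thesis unfolding e1 e2 by (rule pair_term)
      qed
    qed
    also have "\<dots> = (\<Sum>i\<in>S. \<alpha> i / 2) *\<^sub>R idq + dot_sigma (\<Sum>i\<in>S. (sg b * T v i * \<alpha> i / 2) *\<^sub>R nv i)"
      using linear_dot_sigma
      by (simp add: sum.distrib scaleR_sum_left linear_sum linear_cmul)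
    also have "(\<Sum>i\<in>S. (sg b * T v i * \<alpha> i / 2) *\<^sub>R nv i) = (sg b / 2) *\<^sub>R (m *\<^sub>R v)"
      unfolding Tv scaleR_sum_right by (rule sum.cong) (auto simp: algebra_simps)
    also have "(\<Sum>i\<in>S. \<alpha> i / 2) = 1 / 2" using asum by (simp add: sum_divide_distrib[symmetric])
    also have "(1 / 2) *\<^sub>R idq + dot_sigma ((sg b / 2) *\<^sub>R (m *\<^sub>R v)) = P_fam m v b"
      using linear_dot_sigma unfolding P_fam_def sg_def
      by (simp add: linear_cmul scaleR_add_right)
    finally show "P_fam m v b = (\<Sum>j\<in>S \<times> UNIV. p v b j *\<^sub>R sym_POVM \<alpha> nv j)" by simp
  qed
qed


theorem mainTheorem15:
  fixes n :: nat and \<alpha> :: "nat \<Rightarrow> real" and nv :: "nat \<Rightarrow> real^3"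
  assumes "\<forall>i\<in>{1..n}. \<alpha> i \<ge> 0"
    and "\<forall>i\<in>{1..n}. norm (nv i) = 1"
    and "(\<Sum>i\<in>{1..n}. \<alpha> i) = 1"
    and "(\<Sum>i\<in>{1..n}. \<alpha> i *\<^sub>R nv i) = 0"
  shows "\<exists>m. m \<in> {(\<Sum>i\<in>{1..n}. \<alpha> i * \<bar>c \<bullet> nv i\<bar>) | c :: real^3. norm c = 1}
           \<and> (\<forall>c :: real^3. norm c = 1 \<longrightarrow> m \<le> (\<Sum>i\<in>{1..n}. \<alpha> i * \<bar>c \<bullet> nv i\<bar>))
           \<and> simulates_P ({1..n} \<times> UNIV) (sym_POVM \<alpha> nv) m
           \<and> (\<forall>r. simulates_P ({1..n} \<times> UNIV) (sym_POVM \<alpha> nv) r \<longrightarrow> r \<le> m)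
           \<and> R_POVM ({1..n} \<times> UNIV) (sym_POVM \<alpha> nv) = m"
proof -
  let ?h = "\<lambda>c :: real^3. (\<Sum>i\<in>{1..n}. \<alpha> i * \<bar>c \<bullet> nv i\<bar>)"
  have ne: "sphere (0::real^3) 1 \<noteq> {}"
  proof -
    have "norm (axis 1 1 :: real^3) = 1" by simp
    then show ?thesis by (metis empty_iff mem_sphere_0)
  qed
  have "continuous_on (sphere (0::real^3) 1) ?h"
    by (intro continuous_intros)
  then obtain c0 where c0: "c0 \<in> sphere 0 1" "\<forall>y\<in>sphere 0 1. ?h c0 \<le> ?h y"
    using continuous_attains_inf[OF compact_sphere ne] by blast
  define m where "m = ?h c0"
  have c0n: "norm c0 = 1" using c0 by simp
  have minm: "\<forall>c :: real^3. norm c = 1 \<longrightarrow> m \<le> ?h c" using c0 by (simp add: m_def)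
  have m0: "m \<ge> 0" unfolding m_def using assms(1) by (intro sum_nonneg) auto
  have sim: "simulates_P ({1..n} \<times> UNIV) (sym_POVM \<alpha> nv) m"
    using lower[OF _ assms(1) m0 assms(3) minm] by simp
  have up: "\<forall>r. simulates_P ({1..n} \<times> UNIV) (sym_POVM \<alpha> nv) r \<longrightarrow> r \<le> m"
    using upper[OF _ assms(1) _ c0n] by (simp add: m_def)
  have "R_POVM ({1..n} \<times> UNIV) (sym_POVM \<alpha> nv) = m"
    unfolding R_POVM_def using sim up by (intro Greatest_equality) auto
  moreover have "m \<in> {(\<Sum>i\<in>{1..n}. \<alpha> i * \<bar>c \<bullet> nv i\<bar>) | c :: real^3. norm c = 1}"
    using c0n m_def by blast
  ultimately show ?thesis using minm sim up by blast
qed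

end
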